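(* Let $N\ge 2$ and $T\ge 1$ be integers, let $a_1,\ldots,a_N$ be real numbers with $a_1+\cdots+a_N=1$, and let $\mu_1,\ldots,\mu_T$ be real numbers. Let $J$ be the $((N-1)T+1)\times((N-1)T+1)$ real matrix defined as follows (with $e_k$ denoting the $k$-th standard basis row vector of length $(N-1)T+1$): - for $i=1,\ldots,(N-2)T+1$, the $i$-th row of $J$ is $e_{i+T}$; - for $m=1,\ldots,T$, the $((N-2)T+1+m)$-th row of $J$ is $r_m$, where $r_0:=e_{(N-1)T+1}$ and recursively $$r_m=\mu_m\Big(a_1\, r_{m-1}+\sum_{l=2}^{N} a_l\, e_{(N-l)T+m}\Big),\qquad m=1,\ldots,T.$$ Then the eigenvalues of $J$ are precisely the (complex) roots of the polynomial $$p(\lambda)=\lambda^{(N-1)T+1}-(\mu_1\cdots\mu_T)\,\big(a_1\lambda^{N-1}+a_2\lambda^{N-2}+\cdots+a_{N-1}\lambda+a_N\big)^{T}.$$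
   Context: Motivation/setting: for a $C^1$ map $f:\mathbb{R}\to\mathbb{R}$ with a $T$-cycle $x_0^*,\ldots,x_{T-1}^*$ and the delayed feedback control $x(k+1)=f(x(k))+u(k)$, $u(k)=(a_1-1)f(x(k))+a_2f(x(k-T))+\cdots+a_Nf(x(k-(N-1)T))$, define $G:\mathbb{R}^{(N-1)T+1}\to\mathbb{R}^{(N-1)T+1}$ by $G(x_1,\ldots,x_{(N-1)T+1})=(x_2,\ldots,x_{(N-1)T+1},\,a_1f(x_{(N-1)T+1})+a_2f(x_{(N-2)T+1})+\cdots+a_Nf(x_1))$ and $F=G^T$. The matrix $J$ above is the Jacobian of $F$ at the point $(x_0^*,x_1^*,\ldots,x^*_{(N-1)T})$ (indices mod $T$), with $\mu_j$ the derivatives of $f$ along the cycle; however the statement concerns the explicitly defined matrix for arbitrary real $\mu_j$. *)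

theory Defs
  imports Complex_Main "Jordan_Normal_Form.Char_Poly"
begin

text \<open>Rows/columns of matrices are 0-indexed here: the paper's 1-based
  row/column k corresponds to index k-1. The coefficients a and mu keep
  the paper's 1-based indexing (a 1 .. a N, mu 1 .. mu T).\<close>

definition e_row :: "nat \<Rightarrow> nat \<Rightarrow> real" where
  "e_row k j = (if j + 1 = k then 1 else 0)"

fun r_row :: "nat \<Rightarrow> nat \<Rightarrow> (nat \<Rightarrow> real) \<Rightarrow> (nat \<Rightarrow> real) \<Rightarrow> nat \<Rightarrow> nat \<Rightarrow> real" where
  "r_row N T a \<mu> 0 j = e_row ((N - 1) * T + 1) j"
| "r_row N T a \<mu> (Suc m) j =
     \<mu> (Suc m) * (a 1 * r_row N T a \<mu> m j
                   + (\<Sum>l = 2..N. a l * e_row ((N - l) * T + Suc m) j))"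

definition J_mat :: "nat \<Rightarrow> nat \<Rightarrow> (nat \<Rightarrow> real) \<Rightarrow> (nat \<Rightarrow> real) \<Rightarrow> real mat" where
  "J_mat N T a \<mu> = mat ((N - 1) * T + 1) ((N - 1) * T + 1)
     (\<lambda>(i, j). if i + 1 \<le> (N - 2) * T + 1 then e_row (i + 1 + T) j
               else r_row N T a \<mu> (i + 1 - ((N - 2) * T + 1)) j)"

definition p_poly :: "nat \<Rightarrow> nat \<Rightarrow> (nat \<Rightarrow> real) \<Rightarrow> (nat \<Rightarrow> real) \<Rightarrow> real poly" where
  "p_poly N T a \<mu> = monom 1 ((N - 1) * T + 1)
     - Polynomial.smult (\<Prod>m = 1..T. \<mu> m) ((\<Sum>l = 1..N. monom (a l) (N - l)) ^ T)"

end

theory Submission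
  imports Defs
begin


definition Rf :: "nat \<Rightarrow> nat \<Rightarrow> (nat\<Rightarrow>real) \<Rightarrow> (nat\<Rightarrow>real) \<Rightarrow> (nat \<Rightarrow> complex) \<Rightarrow> nat \<Rightarrow> complex" where
 "Rf N T a \<mu> f m = (\<Sum>j<(N-1)*T+1. complex_of_real (r_row N T a \<mu> m j) * f j)"

lemma nt_eq: "N \<ge> 2 \<Longrightarrow> (N-1)*T = (N-2)*T + (T::nat)"
proof -
  assume "N \<ge> 2"
  then have "N - 1 = Suc (N-2)" by arith
  then show ?thesis by simp
qed

lemma sum_e: "1 \<le> k \<Longrightarrow> k \<le> n \<Longrightarrow> (\<Sum>j<n. complex_of_real (e_row k j) * f j) = f (k-1)"
proof -
  assume k: "1 \<le> k" "k \<le> n"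
  have "(\<Sum>j<n. complex_of_real (e_row k j) * f j) = (\<Sum>j<n. if k - 1 = j then f j else 0)"
    by (rule sum.cong) (use k in \<open>auto simp: e_row_def\<close>)
  also have "\<dots> = f (k-1)" using k by (simp add: sum.delta)
  finally show ?thesis .
qed

lemma Rf_0: "Rf N T a \<mu> f 0 = f ((N-1)*T)"
  unfolding Rf_def r_row.simps by (subst sum_e) auto

lemma Rf_Suc:
  assumes N2: "N \<ge> 2" and m: "Suc m \<le> T"
  shows "Rf N T a \<mu> f (Suc m) = of_real (\<mu> (Suc m)) * (of_real (a 1) * Rf N T a \<mu> f m
     + (\<Sum>l=2..N. of_real (a l) * f ((N-l)*T + m)))"
proof -
  let ?n = "(N-1)*T+1"
  let ?e = "\<lambda>l j. complex_of_real (e_row ((N-l)*T + Suc m) j)"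
  have "Rf N T a \<mu> f (Suc m) = (\<Sum>j<?n. of_real (\<mu> (Suc m)) * (of_real (a 1) * (of_real (r_row N T a \<mu> m j) * f j))
      + of_real (\<mu> (Suc m)) * (\<Sum>l=2..N. of_real (a l) * (?e l j * f j)))"
    unfolding Rf_def by (rule sum.cong) (simp_all add: ring_distribs sum_distrib_right mult.assoc)
  also have "\<dots> = of_real (\<mu> (Suc m)) * (of_real (a 1) * Rf N T a \<mu> f m)
      + of_real (\<mu> (Suc m)) * (\<Sum>j<?n. \<Sum>l=2..N. of_real (a l) * (?e l j * f j))"
    unfolding Rf_def by (simp add: sum.distrib sum_distrib_left del: sum.lessThan_Suc)
  also have "(\<Sum>j<?n. \<Sum>l=2..N. of_real (a l) * (?e l j * f j)) = (\<Sum>l=2..N. of_real (a l) * (\<Sum>j<?n. ?e l j * f j))"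
    by (subst sum.swap) (simp add: sum_distrib_left del: sum.lessThan_Suc)
  also have "\<dots> = (\<Sum>l=2..N. of_real (a l) * f ((N-l)*T + m))"
  proof (rule sum.cong)
    fix l assume l: "l \<in> {2..N}"
    have "(N-l)*T \<le> (N-2)*T" using l by (intro mult_le_mono1) auto
    then have "(N-l)*T + Suc m \<le> ?n" using nt_eq[OF N2, of T] m by linarith
    then show "of_real (a l) * (\<Sum>j<?n. ?e l j * f j) = of_real (a l) * f ((N-l)*T + m)"
      by (subst sum_e) auto
  qed simp
  finally show ?thesis by (simp add: ring_distribs)
qed


lemma J_dim: "dim_row (J_mat N T a \<mu>) = (N-1)*T+1" "dim_col (J_mat N T a \<mu>) = (N-1)*T+1"
  by (simp_all add: J_mat_def)

lemma Mv:
  assumes N2: "N \<ge> 2" and v: "v \<in> carrier_vec ((N-1)*T+1)" and i: "i < (N-1)*T+1"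
  shows "(map_mat complex_of_real (J_mat N T a \<mu>) *\<^sub>v v) $ i =
    (if i \<le> (N-2)*T then v$(i+T) else Rf N T a \<mu> (\<lambda>j. v$j) (i - (N-2)*T))"
proof -
  let ?n = "(N-1)*T+1"
  have dv: "dim_vec v = ?n" using v by simp
  have "(map_mat complex_of_real (J_mat N T a \<mu>) *\<^sub>v v) $ i = row (map_mat complex_of_real (J_mat N T a \<mu>)) i \<bullet> v"
    by (rule index_mult_mat_vec) (use i in \<open>simp add: J_dim\<close>)
  also have "\<dots> = (\<Sum>j<?n. complex_of_real (if i + 1 \<le> (N - 2) * T + 1 then e_row (i + 1 + T) j
               else r_row N T a \<mu> (i + 1 - ((N - 2) * T + 1)) j) * v$j)"
    unfolding scalar_prod_def dv atLeast0LessThan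
  proof (rule sum.cong)
    fix j assume "j \<in> {..<?n}"
    then have j: "j < ?n" by simp
    have "row (map_mat complex_of_real (J_mat N T a \<mu>)) i $ j = complex_of_real (J_mat N T a \<mu> $$ (i,j))"
      using i j by (simp add: J_dim)
    then show "row (map_mat complex_of_real (J_mat N T a \<mu>)) i $ j * v $ j = complex_of_real (if i + 1 \<le> (N - 2) * T + 1 then e_row (i + 1 + T) j
               else r_row N T a \<mu> (i + 1 - ((N - 2) * T + 1)) j) * v$j"
      using i j by (simp add: J_mat_def)
  qed simp
  also have "\<dots> = (if i \<le> (N-2)*T then v$(i+T) else Rf N T a \<mu> (\<lambda>j. v$j) (i - (N-2)*T))"
  proof (cases "i \<le> (N-2)*T")
    case True
    then have "i + 1 + T \<le> ?n" using nt_eq[OF N2, of T] by linarith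
    then have "(\<Sum>j<?n. complex_of_real (e_row (i + 1 + T) j) * v$j) = v$(i+1+T-1)"
      by (intro sum_e) auto
    moreover have "(\<Sum>j<?n. complex_of_real (if i + 1 \<le> (N - 2) * T + 1 then e_row (i + 1 + T) j
               else r_row N T a \<mu> (i + 1 - ((N - 2) * T + 1)) j) * v$j) = (\<Sum>j<?n. complex_of_real (e_row (i + 1 + T) j) * v$j)"
      using True by (intro sum.cong) auto
    ultimately show ?thesis using True by simp
  next
    case False
    then show ?thesis unfolding Rf_def by simp
  qed
  finally show ?thesis .
qed

lemma Mv1:
  assumes N2: "N \<ge> 2" and v: "v \<in> carrier_vec ((N-1)*T+1)" and i: "i \<le> (N-2)*T"
  shows "(map_mat complex_of_real (J_mat N T a \<mu>) *\<^sub>v v) $ i = v$(i+T)"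
proof -
  have "i < (N-1)*T+1" using i nt_eq[OF N2, of T] by linarith
  from Mv[OF N2 v this] i show ?thesis by simp
qed

lemma Mv2:
  assumes N2: "N \<ge> 2" and v: "v \<in> carrier_vec ((N-1)*T+1)" and m: "1 \<le> m" "m \<le> T"
  shows "(map_mat complex_of_real (J_mat N T a \<mu>) *\<^sub>v v) $ ((N-2)*T+m) = Rf N T a \<mu> (\<lambda>j. v$j) m"
proof -
  have "(N-2)*T+m < (N-1)*T+1" using m nt_eq[OF N2, of T] by linarith
  from Mv[OF N2 v this] m show ?thesis by simp
qed

definition EQ :: "nat \<Rightarrow> nat \<Rightarrow> (nat\<Rightarrow>real) \<Rightarrow> (nat\<Rightarrow>real) \<Rightarrow> (nat \<Rightarrow> complex) \<Rightarrow> complex \<Rightarrow> bool" where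
  "EQ N T a \<mu> f z = ((\<forall>i \<le> (N-2)*T. f (i+T) = z * f i) \<and>
     (\<forall>m. 1 \<le> m \<and> m \<le> T \<longrightarrow> Rf N T a \<mu> f m = z * f ((N-2)*T+m)))"

lemma eigen_iff:
  assumes N2: "N \<ge> 2" and v: "v \<in> carrier_vec ((N-1)*T+1)"
  shows "(map_mat complex_of_real (J_mat N T a \<mu>) *\<^sub>v v = z \<cdot>\<^sub>v v) \<longleftrightarrow> EQ N T a \<mu> (\<lambda>j. v$j) z"
proof
  let ?n = "(N-1)*T+1"
  let ?M = "map_mat complex_of_real (J_mat N T a \<mu>)"
  have nt: "(N-1)*T = (N-2)*T + T" using nt_eq[OF N2] .
  have dv: "dim_vec v = ?n" using v by simp
  have sm: "(z \<cdot>\<^sub>v v) $ i = z * v $ i" if "i < ?n" for i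
    using that dv by simp
  {
    assume eq: "?M *\<^sub>v v = z \<cdot>\<^sub>v v"
    have A: "v$(i+T) = z * v$i" if "i \<le> (N-2)*T" for i
    proof -
      have i: "i < ?n" using that nt by linarith
      show ?thesis using Mv1[OF N2 v that, of a \<mu>] sm[OF i] eq by argo
    qed
    have B: "Rf N T a \<mu> (\<lambda>j. v$j) m = z * v$((N-2)*T+m)" if "1 \<le> m" "m \<le> T" for m
    proof -
      have i: "(N-2)*T+m < ?n" using that nt by linarith
      show ?thesis using Mv2[OF N2 v that, of a \<mu>] sm[OF i] eq by argo
    qed
    show "EQ N T a \<mu> (\<lambda>j. v$j) z" unfolding EQ_def using A B by blast
  }
  {
    assume E: "EQ N T a \<mu> (\<lambda>j. v$j) z"
    show "?M *\<^sub>v v = z \<cdot>\<^sub>v v"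
    proof (rule eq_vecI)
      show "dim_vec (?M *\<^sub>v v) = dim_vec (z \<cdot>\<^sub>v v)" using dv by (simp add: J_dim)
      fix i assume "i < dim_vec (z \<cdot>\<^sub>v v)"
      then have i: "i < ?n" using dv by simp
      show "(?M *\<^sub>v v) $ i = (z \<cdot>\<^sub>v v) $ i"
      proof (cases "i \<le> (N-2)*T")
        case True
        have "v$(i+T) = z * v $ i" using E True unfolding EQ_def by blast
        then show ?thesis using Mv1[OF N2 v True, of a \<mu>] sm[OF i] by argo
      next
        case False
        define m where "m = i - (N-2)*T"
        have m: "1 \<le> m" "m \<le> T" and im: "(N-2)*T + m = i" using False i nt unfolding m_def by linarith+
        have "Rf N T a \<mu> (\<lambda>j. v$j) m = z * v $ ((N-2)*T + m)" using E m unfolding EQ_def by blast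
        then show ?thesis using Mv2[OF N2 v m, of a \<mu>] sm[OF i] unfolding im by argo
      qed
    qed
  }
qed



definition Q :: "nat \<Rightarrow> (nat \<Rightarrow> real) \<Rightarrow> complex \<Rightarrow> complex" where
  "Q N a z = (\<Sum>l=1..N. complex_of_real (a l) * z^(N-l))"

lemma Q_split: "N \<ge> 2 \<Longrightarrow> Q N a z = of_real (a 1) * z^(N-1) + (\<Sum>l=2..N. complex_of_real (a l) * z^(N-l))"
proof -
  assume "N \<ge> 2"
  then have "{1..N} = insert 1 {2..N}" by auto
  then show ?thesis unfolding Q_def by simp
qed

lemma step:
  assumes N2: "N \<ge> 2" and m: "m < T"
    and hR: "Rf N T a \<mu> f m = z^(N-1) * f m"
    and hF: "\<And>l. l \<in> {2..N} \<Longrightarrow> f ((N-l)*T+m) = z^(N-l) * f m"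
  shows "Rf N T a \<mu> f (Suc m) = of_real (\<mu> (Suc m)) * Q N a z * f m"
proof -
  have "Rf N T a \<mu> f (Suc m) = of_real (\<mu> (Suc m)) * (of_real (a 1) * (z^(N-1) * f m)
     + (\<Sum>l=2..N. of_real (a l) * (z^(N-l) * f m)))"
    using Rf_Suc[OF N2, of m T a \<mu> f] m hR hF by simp
  also have "\<dots> = of_real (\<mu> (Suc m)) * Q N a z * f m"
    unfolding Q_split[OF N2] by (simp add: algebra_simps sum_distrib_left sum_distrib_right)
  finally show ?thesis .
qed

lemma FORM_of_A:
  fixes f :: "nat \<Rightarrow> complex"
  assumes N2: "N \<ge> 2" and T1: "T \<ge> 1"
    and A: "\<And>i. i \<le> (N-2)*T \<Longrightarrow> f (i+T) = z * f i"
  shows "k < (N-1)*T+1 \<Longrightarrow> f k = z^(k div T) * f (k mod T)"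
proof (induction k rule: less_induct)
  case (less k)
  show ?case
  proof (cases "k < T")
    case True
    then show ?thesis by simp
  next
    case False
    define i where "i = k - T"
    have k: "k = i + T" using False unfolding i_def by simp
    have i: "i \<le> (N-2)*T" using less.prems nt_eq[OF N2, of T] unfolding i_def by linarith
    have "i < k" "i < (N-1)*T+1" using T1 less.prems k by linarith+
    then have "f i = z^(i div T) * f (i mod T)" using less.IH by blast
    then have "f k = z * (z^(i div T) * f (i mod T))" using A[OF i] k by simp
    then show ?thesis using k T1 by simp
  qed
qed

lemma form_facts:
  fixes f :: "nat \<Rightarrow> complex"
  assumes N2: "N \<ge> 2" and T1: "T \<ge> 1"
    and F0: "\<forall>k < (N-1)*T+1. f k = z^(k div T) * f (k mod T)"
  shows form_a: "\<And>m l. m < T \<Longrightarrow> l \<in> {2..N} \<Longrightarrow> f ((N-l)*T+m) = z^(N-l) * f m"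
    and form_b: "f ((N-1)*T) = z^(N-1) * f 0"
    and form_c: "\<And>m. m < T \<Longrightarrow> f ((N-2)*T+m) = z^(N-2) * f m"
    and form_d: "\<And>i. i \<le> (N-2)*T \<Longrightarrow> f (i+T) = z * f i"
proof -
  have nt: "(N-1)*T = (N-2)*T + T" using nt_eq[OF N2] .
  have F: "f k = z^(k div T) * f (k mod T)" if "k < (N-1)*T+1" for k using F0 that by blast
  show "f ((N-l)*T+m) = z^(N-l) * f m" if "m < T" "l \<in> {2..N}" for m l
  proof -
    have "(N-l)*T \<le> (N-2)*T" using that by (intro mult_le_mono1) auto
    then have "(N-l)*T+m < (N-1)*T+1" using nt that by linarith
    from F[OF this] that show ?thesis by simp
  qed
  show "f ((N-1)*T) = z^(N-1) * f 0" using F[of "(N-1)*T"] T1 by simp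
  show "f ((N-2)*T+m) = z^(N-2) * f m" if "m < T" for m
    using F[of "(N-2)*T+m"] that nt by simp
  show "f (i+T) = z * f i" if "i \<le> (N-2)*T" for i
  proof -
    have i: "i + T < (N-1)*T+1" "i < (N-1)*T+1" using that nt T1 by linarith+
    show ?thesis using F[OF i(1)] F[OF i(2)] T1 by simp
  qed
qed


lemma forward:
  fixes f :: "nat \<Rightarrow> complex"
  assumes N2: "N \<ge> 2" and T1: "T \<ge> 1" and E: "EQ N T a \<mu> f z"
    and nz: "\<exists>k < (N-1)*T+1. f k \<noteq> 0"
  shows "z^((N-1)*T+1) = (\<Prod>k=1..T. of_real (\<mu> k) * Q N a z)"
proof -
  let ?c = "\<lambda>k. of_real (\<mu> k) * Q N a z"
  have nt: "(N-1)*T = (N-2)*T + T" using nt_eq[OF N2] .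
  have A: "\<And>i. i \<le> (N-2)*T \<Longrightarrow> f (i+T) = z * f i" using E unfolding EQ_def by blast
  have B: "\<And>m. 1 \<le> m \<Longrightarrow> m \<le> T \<Longrightarrow> Rf N T a \<mu> f m = z * f ((N-2)*T+m)" using E unfolding EQ_def by blast
  have F: "\<And>k. k < (N-1)*T+1 \<Longrightarrow> f k = z^(k div T) * f (k mod T)"
    using FORM_of_A[where f=f and z=z, OF N2 T1 A] by blast
  have F': "\<forall>k < (N-1)*T+1. f k = z^(k div T) * f (k mod T)" using F by blast
  note ff = form_facts[where f=f and z=z, OF N2 T1 F']
  have zz: "z * z^(N-2) = z^(N-1)" using N2
    by (metis One_nat_def Suc_diff_le diff_Suc_Suc power_Suc numeral_2_eq_2)
  define g where "g m = (if m < T then f m else z * f 0)" for m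
  have G: "Rf N T a \<mu> f m = z^(N-1) * g m" if "m \<le> T" for m
  proof (cases "m = 0")
    case True
    then show ?thesis using Rf_0 ff(2) T1 unfolding g_def by simp
  next
    case False
    then have B': "Rf N T a \<mu> f m = z * f ((N-2)*T+m)" using B that by simp
    show ?thesis
    proof (cases "m < T")
      case True
      then show ?thesis using B' ff(3)[OF True] zz unfolding g_def by (simp add: mult.assoc[symmetric])
    next
      case False
      then have "m = T" using that by simp
      then show ?thesis using B' ff(2) nt unfolding g_def by (simp add: algebra_simps)
    qed
  qed
  have Rec: "z^(N-1) * g (Suc m) = ?c (Suc m) * g m" if "m < T" for m
  proof -
    have "Rf N T a \<mu> f m = z^(N-1) * f m" using G[of m] that unfolding g_def by simp
    from step[OF N2 that this ff(1)[OF that]] have "Rf N T a \<mu> f (Suc m) = ?c (Suc m) * f m" .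
    then show ?thesis using G[of "Suc m"] that unfolding g_def by simp
  qed
  have Prod: "z^((N-1)*m) * g m = (\<Prod>k=1..m. ?c k) * g 0" if "m \<le> T" for m
    using that
  proof (induction m)
    case 0
    then show ?case by simp
  next
    case (Suc m)
    have "z^((N-1)*Suc m) * g (Suc m) = z^((N-1)*m) * (z^(N-1) * g (Suc m))"
      by (simp add: power_add mult.assoc mult.commute)
    also have "\<dots> = ?c (Suc m) * (z^((N-1)*m) * g m)" using Rec[of m] Suc.prems by simp
    also have "\<dots> = ?c (Suc m) * ((\<Prod>k=1..m. ?c k) * g 0)" using Suc by simp
    also have "\<dots> = (\<Prod>k=1..Suc m. ?c k) * g 0" by (simp add: prod.nat_ivl_Suc')
    finally show ?case .
  qed
  have PT: "(z^((N-1)*T+1) - (\<Prod>k=1..T. ?c k)) * f 0 = 0"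
    using Prod[of T] T1 unfolding g_def by (simp add: algebra_simps)
  show ?thesis
  proof (rule ccontr)
    assume P: "z^((N-1)*T+1) \<noteq> (\<Prod>k=1..T. ?c k)"
    then have f0: "f 0 = 0" using PT by simp
    have all: "f m = 0" if "m < T" for m
    proof (cases "z = 0")
      case False
      have "g m = 0" if "m \<le> T" for m
        using that
      proof (induction m)
        case 0 then show ?case using f0 T1 unfolding g_def by simp
      next
        case (Suc m)
        then have "z^(N-1) * g (Suc m) = 0" using Rec[of m] by simp
        then show ?case using False by simp
      qed
      then show ?thesis using that unfolding g_def by (metis less_imp_le)
    next
      case True
      then have "(\<Prod>k=1..T. ?c k) \<noteq> 0" using P by simp
      then have "\<forall>k\<in>{1..T}. ?c k \<noteq> 0" by (simp add: prod_zero_iff)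
      moreover have "Suc m \<in> {1..T}" using that by simp
      ultimately have "?c (Suc m) \<noteq> 0" by blast
      moreover have z0: "z^(N-1) = 0" using True N2 by simp
      moreover have "?c (Suc m) * g m = 0" using Rec[OF that] unfolding z0 by simp
      ultimately have "g m = 0" by simp
      then show ?thesis using that unfolding g_def by simp
    qed
    have "f k = 0" if "k < (N-1)*T+1" for k
      using F[OF that] all[of "k mod T"] T1 by simp
    then show False using nz by blast
  qed
qed

lemma construct:
  fixes h :: "nat \<Rightarrow> complex"
  assumes N2: "N \<ge> 2" and T1: "T \<ge> 1"
    and R: "\<And>m. m < T \<Longrightarrow> z^(N-1) * (if Suc m < T then h (Suc m) else z * h 0)
               = of_real (\<mu> (Suc m)) * Q N a z * h m"
  shows "EQ N T a \<mu> (\<lambda>k. z^(k div T) * h (k mod T)) z"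
proof -
  define f where "f k = z^(k div T) * h (k mod T)" for k
  have nt: "(N-1)*T = (N-2)*T + T" using nt_eq[OF N2] .
  have fm: "f m = h m" if "m < T" for m using that unfolding f_def by simp
  have F: "f k = z^(k div T) * f (k mod T)" for k
    unfolding f_def using T1 by simp
  have F': "\<forall>k < (N-1)*T+1. f k = z^(k div T) * f (k mod T)" using F by blast
  note ff = form_facts[where f=f and z=z, OF N2 T1 F']
  have zz: "z * z^(N-2) = z^(N-1)" using N2
    by (metis One_nat_def Suc_diff_le diff_Suc_Suc power_Suc numeral_2_eq_2)
  define g where "g m = (if m < T then h m else z * h 0)" for m
  have G: "Rf N T a \<mu> f m = z^(N-1) * g m" if "m \<le> T" for m
    using that
  proof (induction m)
    case 0
    then show ?case using Rf_0 ff(2) T1 fm[of 0] unfolding g_def by simp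
  next
    case (Suc m)
    then have m: "m < T" by simp
    have "Rf N T a \<mu> f m = z^(N-1) * f m" using Suc m fm[OF m] unfolding g_def by simp
    from step[OF N2 m this ff(1)[OF m]]
    have "Rf N T a \<mu> f (Suc m) = of_real (\<mu> (Suc m)) * Q N a z * h m" using fm[OF m] by simp
    also have "\<dots> = z^(N-1) * g (Suc m)" using R[OF m] unfolding g_def by simp
    finally show ?case .
  qed
  have B: "Rf N T a \<mu> f m = z * f ((N-2)*T+m)" if "1 \<le> m" "m \<le> T" for m
  proof (cases "m < T")
    case True
    then show ?thesis using G[OF that(2)] ff(3)[OF True] fm[OF True] zz unfolding g_def
      by (simp add: mult.assoc[symmetric])
  next
    case False
    then have "m = T" using that by simp
    then show ?thesis using G[OF that(2)] ff(2) nt fm[of 0] T1 unfolding g_def by (simp add: algebra_simps)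
  qed
  show ?thesis unfolding EQ_def f_def[symmetric] using ff(4) B by blast
qed

lemma backward:
  assumes N2: "N \<ge> 2" and T1: "T \<ge> 1"
    and P: "z^((N-1)*T+1) = (\<Prod>k=1..T. of_real (\<mu> k) * Q N a z)"
  shows "\<exists>f. EQ N T a \<mu> f z \<and> (\<exists>k < (N-1)*T+1. f k \<noteq> 0)"
proof -
  let ?c = "\<lambda>k. of_real (\<mu> k) * Q N a z"
  have nt: "(N-1)*T = (N-2)*T + T" using nt_eq[OF N2] .
  show ?thesis
  proof (cases "z = 0")
    case False
    define h where "h m = (\<Prod>k=1..m. ?c k) / z^((N-1)*m)" for m
    have H: "z^(N-1) * h (Suc m) = ?c (Suc m) * h m" for m
      unfolding h_def using False by (simp add: prod.nat_ivl_Suc' power_add field_simps)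
    have hT: "h T = z" unfolding h_def P[symmetric] using False by (simp add: power_add)
    have h0: "h 0 = 1" unfolding h_def by simp
    have R: "z^(N-1) * (if Suc m < T then h (Suc m) else z * h 0) = ?c (Suc m) * h m" if "m < T" for m
    proof (cases "Suc m < T")
      case True then show ?thesis using H by simp
    next
      case False
      then have "Suc m = T" using that by simp
      then show ?thesis using H[of m] hT h0 False by simp
    qed
    have "EQ N T a \<mu> (\<lambda>k. z^(k div T) * h (k mod T)) z"
      using construct[OF N2 T1 R] by (simp add: mult.assoc)
    moreover have "(\<lambda>k. z^(k div T) * h (k mod T)) 0 \<noteq> 0" using h0 by simp
    ultimately show ?thesis by (intro exI[of _ "\<lambda>k. z^(k div T) * h (k mod T)"]) auto
  next
    case True
    then have "(\<Prod>k=1..T. ?c k) = 0" using P by simp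
    then obtain k where k: "k \<in> {1..T}" "?c k = 0" by (auto simp: prod_zero_iff)
    define h where "h m = (if m = k - 1 then 1 else (0::complex))" for m
    have z0: "z^(N-1) = 0" using True N2 by simp
    have R: "z^(N-1) * (if Suc m < T then h (Suc m) else z * h 0) = ?c (Suc m) * h m" if "m < T" for m
    proof (cases "m = k - 1")
      case True
      then have "Suc m = k" using k by simp
      then have c0: "?c (Suc m) = 0" using k(2) by simp
      show ?thesis by (simp only: z0 c0) simp
    next
      case False
      then show ?thesis using z0 unfolding h_def by simp
    qed
    have "EQ N T a \<mu> (\<lambda>k. z^(k div T) * h (k mod T)) z"
      using construct[OF N2 T1 R] by (simp add: mult.assoc)
    moreover have "(\<lambda>k. z^(k div T) * h (k mod T)) (k-1) \<noteq> 0"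
    proof -
      have "k - 1 < T" using k by auto
      then show ?thesis unfolding h_def by simp
    qed
    moreover have "k - 1 < (N-1)*T+1" using k nt by auto
    ultimately show ?thesis by (intro exI[of _ "\<lambda>k. z^(k div T) * h (k mod T)"]) blast
  qed
qed


interpretation crh: map_poly_comm_ring_hom "complex_of_real"
  by unfold_locales auto

lemma poly_p: "poly (map_poly complex_of_real (p_poly N T a \<mu>)) z
   = z^((N-1)*T+1) - (\<Prod>k=1..T. of_real (\<mu> k) * Q N a z)"
proof -
  have "poly (map_poly complex_of_real (p_poly N T a \<mu>)) z = z^((N-1)*T+1) - of_real (\<Prod>m = 1..T. \<mu> m) * (\<Sum>l = 1..N. of_real (a l) * z^(N-l))^T"
    unfolding p_poly_def
    by (simp add: crh.hom_minus crh.hom_power crh.hom_sum map_poly_smult poly_monom poly_sum map_poly_monom)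
  also have "\<dots> = z^((N-1)*T+1) - (\<Prod>k=1..T. of_real (\<mu> k) * Q N a z)"
    unfolding Q_def by (simp add: prod.distrib)
  finally show ?thesis .
qed

lemma EQ_cong:
  assumes N2: "N \<ge> 2" and fg: "\<And>j. j < (N-1)*T+1 \<Longrightarrow> f j = g j" and E: "EQ N T a \<mu> f z"
  shows "EQ N T a \<mu> g z"
proof -
  have nt: "(N-1)*T = (N-2)*T + T" using nt_eq[OF N2] .
  have R: "Rf N T a \<mu> f m = Rf N T a \<mu> g m" for m
    unfolding Rf_def by (rule sum.cong) (auto simp: fg)
  have A: "g (i+T) = z * g i" if "i \<le> (N-2)*T" for i
  proof -
    have "i+T < (N-1)*T+1" "i < (N-1)*T+1" using that nt by linarith+
    then show ?thesis using E that fg unfolding EQ_def by metis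
  qed
  have B: "Rf N T a \<mu> g m = z * g ((N-2)*T+m)" if "1 \<le> m" "m \<le> T" for m
  proof -
    have "(N-2)*T+m < (N-1)*T+1" using that nt by linarith
    then show ?thesis using E that fg R unfolding EQ_def by metis
  qed
  show ?thesis unfolding EQ_def using A B by blast
qed

theorem lemma1:
  fixes N T :: nat and a \<mu> :: "nat \<Rightarrow> real"
  assumes "N \<ge> 2" and "T \<ge> 1"
    and "(\<Sum>l = 1..N. a l) = 1"
  shows "\<forall>z::complex.
           eigenvalue (map_mat complex_of_real (J_mat N T a \<mu>)) z
           \<longleftrightarrow> poly (map_poly complex_of_real (p_poly N T a \<mu>)) z = 0"
proof (intro allI iffI)
  fix z :: complex
  note N2 = assms(1) and T1 = assms(2)
  let ?M = "map_mat complex_of_real (J_mat N T a \<mu>)"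
  let ?n = "(N-1)*T+1"
  have dM: "dim_row ?M = ?n" by (simp add: J_dim)
  {
    assume "eigenvalue ?M z"
    then obtain v where ev: "eigenvector ?M v z" unfolding eigenvalue_def by blast
    then have v: "v \<in> carrier_vec ?n" and v0: "v \<noteq> 0\<^sub>v ?n" and eq: "?M *\<^sub>v v = z \<cdot>\<^sub>v v"
      unfolding eigenvector_def dM by auto
    have E: "EQ N T a \<mu> (\<lambda>j. v$j) z" using eigen_iff[OF N2 v] eq by blast
    have nz: "\<exists>k < ?n. v$k \<noteq> 0"
    proof (rule ccontr)
      assume "\<not> ?thesis"
      then have "v = 0\<^sub>v ?n" using v by (intro eq_vecI) auto
      then show False using v0 by simp
    qed
    have "z^?n = (\<Prod>k=1..T. of_real (\<mu> k) * Q N a z)" using forward[OF N2 T1 E nz] .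
    then show "poly (map_poly complex_of_real (p_poly N T a \<mu>)) z = 0" unfolding poly_p by simp
  }
  {
    assume "poly (map_poly complex_of_real (p_poly N T a \<mu>)) z = 0"
    then have P: "z^?n = (\<Prod>k=1..T. of_real (\<mu> k) * Q N a z)" unfolding poly_p by simp
    obtain f where E: "EQ N T a \<mu> f z" and nz: "\<exists>k < ?n. f k \<noteq> 0"
      using backward[OF N2 T1 P] by blast
    define v where "v = vec ?n f"
    have v: "v \<in> carrier_vec ?n" unfolding v_def by simp
    have E': "EQ N T a \<mu> (\<lambda>j. v$j) z"
      by (rule EQ_cong[OF N2 _ E]) (simp add: v_def)
    have v0: "v \<noteq> 0\<^sub>v ?n"
    proof
      assume "v = 0\<^sub>v ?n"
      then show False using nz unfolding v_def
        by (metis index_vec index_zero_vec(1))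
    qed
    have "?M *\<^sub>v v = z \<cdot>\<^sub>v v" using eigen_iff[OF N2 v] E' by blast
    then have "eigenvector ?M v z" unfolding eigenvector_def dM using v v0 by blast
    then show "eigenvalue ?M z" unfolding eigenvalue_def by blast
  }
qed

end
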